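(* Let $k\in[n-1]$, $w\in S_n^{k\searrow}$ and $k'\le k$ with $k'\in[n-1]$. If $u\in S_n$ satisfies $u\le_{k'}w$, then $u\in S_n^{k\searrow}$.
   Context: Permutations in one-line notation; for $i<j$, $wt_{i,j}$ is $w$ with positions $i,j$ swapped; $\ell$ is the number of inversions. $u\lessdot w$ iff $w=ut_{i,j}$ for some $i<j$ and $\ell(w)=\ell(u)+1$; $u\lessdot_{k'}w$ iff moreover $i\le k'<j$; $\le_{k'}$ is the $k'$-Bruhat order, the reflexive-transitive closure of $\lessdot_{k'}$. For $k\in\{0,\dots,n-1\}$, $S_n^{k\searrow}=\{v\in S_n: v(k+1)>v(k+2)>\dots>v(n)\}$. *)

theory Defs
  imports "HOL-Combinatorics.Permutations"
begin

definition swap_pos :: "(nat \<Rightarrow> nat) \<Rightarrow> nat \<Rightarrow> nat \<Rightarrow> (nat \<Rightarrow> nat)" where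
  "swap_pos w i j = w \<circ> Transposition.transpose i j"

definition inv_count :: "nat \<Rightarrow> (nat \<Rightarrow> nat) \<Rightarrow> nat" where
  "inv_count n w = card {(i, j). 1 \<le> i \<and> i < j \<and> j \<le> n \<and> w i > w j}"

definition kcover :: "nat \<Rightarrow> nat \<Rightarrow> (nat \<Rightarrow> nat) \<Rightarrow> (nat \<Rightarrow> nat) \<Rightarrow> bool" where
  "kcover n k u w \<longleftrightarrow> u permutes {1..n} \<and>
     (\<exists>i j. 1 \<le> i \<and> i \<le> k \<and> k < j \<and> j \<le> n \<and> w = swap_pos u i j
        \<and> inv_count n w = inv_count n u + 1)"

definition kbruhat_le :: "nat \<Rightarrow> nat \<Rightarrow> (nat \<Rightarrow> nat) \<Rightarrow> (nat \<Rightarrow> nat) \<Rightarrow> bool" where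
  "kbruhat_le n k = (kcover n k)\<^sup>*\<^sup>*"

definition desc_tail :: "nat \<Rightarrow> nat \<Rightarrow> (nat \<Rightarrow> nat) set" where
  "desc_tail n k = {v. v permutes {1..n} \<and> (\<forall>i j. k + 1 \<le> i \<and> i < j \<and> j \<le> n \<longrightarrow> v i > v j)}"

end

theory Submission
  imports Defs
begin

definition invs :: "nat \<Rightarrow> (nat \<Rightarrow> nat) \<Rightarrow> (nat \<times> nat) set" where
  "invs n w = {(i, j). 1 \<le> i \<and> i < j \<and> j \<le> n \<and> w i > w j}"

lemma finite_invs: "finite (invs n w)"
  by (rule finite_subset[of _ "{1..n} \<times> {1..n}"]) (auto simp: invs_def)

lemma key:
  fixes u :: "nat \<Rightarrow> nat"
  assumes perm: "u permutes {1..n}" and ij: "1 \<le> i" "i < j" "j \<le> n" and uij: "u i < u j"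
    and E: "E \<subseteq> {(i,j)} \<union> {(i,a)|a. i < a \<and> a < j \<and> u i < u a \<and> u a < u j}
                 \<union> {(a,j)|a. i < a \<and> a < j \<and> u i < u a \<and> u a < u j}"
  shows "inv_count n u + card E \<le> inv_count n (swap_pos u i j)"
proof -
  let ?t = "Transposition.transpose i j"
  let ?v = "swap_pos u i j"
  have v: "?v x = u (?t x)" for x by (simp add: swap_pos_def)
  have inj: "inj u" using perm permutes_inj by blast
  define fl where "fl = (\<lambda>(p::nat,q::nat). (p = i \<and> q \<le> j) \<or> (q = j \<and> i \<le> p))"
  define h where "h = (\<lambda>(p,q). if fl (p,q) then (p,q) else (?t p, ?t q))"
  have hin: "h x \<in> invs n ?v" if "x \<in> invs n u" for x
  proof -
    obtain p q where x: "x = (p,q)" by force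
    have pq: "1 \<le> p" "p < q" "q \<le> n" "u p > u q" using that x by (auto simp: invs_def)
    show ?thesis
    proof (cases "fl (p,q)")
      case True
      then have "(p = i \<and> q \<le> j) \<or> (q = j \<and> i \<le> p)" by (simp add: fl_def)
      then show ?thesis using pq ij uij x
        by (auto simp: h_def fl_def invs_def v Transposition.transpose_def)
    next
      case False
      then have "\<not> ((p = i \<and> q \<le> j) \<or> (q = j \<and> i \<le> p))" by (simp add: fl_def)
      then show ?thesis using pq ij uij x False
        by (auto simp: h_def invs_def v Transposition.transpose_def)
    qed
  qed
  have hinj: "inj_on h (invs n u)"
  proof (rule inj_onI)
    fix x y assume x: "x \<in> invs n u" and y: "y \<in> invs n u" and e: "h x = h y"
    obtain p q where xp: "x = (p,q)" by force
    obtain p' q' where yp: "y = (p',q')" by force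
    have "p < q" "p' < q'" using x y xp yp by (auto simp: invs_def)
    then show "x = y" using e xp yp ij
      by (auto simp: h_def fl_def Transposition.transpose_def split: if_splits)
  qed
  have Ein: "E \<subseteq> invs n ?v"
    using E ij uij by (auto simp: invs_def v Transposition.transpose_def)
  have Edisj: "E \<inter> h ` invs n u = {}"
  proof -
    { fix x assume xi: "x \<in> invs n u" and hx: "h x \<in> E"
      obtain p q where xp: "x = (p,q)" by force
      have pq: "1 \<le> p" "p < q" "q \<le> n" "u p > u q" using xi xp by (auto simp: invs_def)
      have False using pq hx ij uij E xp
        by (auto simp: h_def fl_def Transposition.transpose_def split: if_splits) }
    then show ?thesis by blast
  qed
  have fE: "finite E" using Ein finite_subset finite_invs by blast
  have "inv_count n u + card E = card (h ` invs n u) + card E"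
    using card_image[OF hinj] by (simp add: inv_count_def invs_def)
  also have "\<dots> = card (h ` invs n u \<union> E)"
    using Edisj fE finite_invs by (subst card_Un_disjoint) auto
  also have "\<dots> \<le> card (invs n ?v)"
    using hin Ein by (intro card_mono finite_invs) auto
  finally show ?thesis by (simp add: inv_count_def invs_def)
qed

lemma cover_step:
  assumes k: "k' \<le> k" and c: "kcover n k' u v" and vd: "v \<in> desc_tail n k"
  shows "u \<in> desc_tail n k"
proof -
  have perm: "u permutes {1..n}" using c by (simp add: kcover_def)
  obtain i j where ij: "1 \<le> i" "i \<le> k'" "k' < j" "j \<le> n" and vdef: "v = swap_pos u i j"
    and len: "inv_count n v = inv_count n u + 1"
    using c by (auto simp: kcover_def)
  have v: "v x = u (Transposition.transpose i j x)" for x by (simp add: vdef swap_pos_def)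
  have inj: "inj u" using perm permutes_inj by blast
  have vperm: "v permutes {1..n}" using vd by (simp add: desc_tail_def)
  have ij': "i < j" using ij by simp
  have uij: "u i < u j"
  proof (rule ccontr)
    assume "\<not> u i < u j"
    moreover have "u i \<noteq> u j" using inj ij' by (metis less_irrefl injD)
    ultimately have "v i < v j" by (simp add: v Transposition.transpose_def)
    have "u = swap_pos v i j"
      by (rule ext) (simp add: vdef swap_pos_def Transposition.transpose_def)
    then have "inv_count n v + card {(i,j)} \<le> inv_count n u"
      using key[OF vperm ij(1) ij' ij(4) \<open>v i < v j\<close>, of "{(i,j)}"] by auto
    then show False using len by simp
  qed
  have vt: "v p > v q" if "k + 1 \<le> p" "p < q" "q \<le> n" for p q
    using vd that by (simp add: desc_tail_def)
  have vi: "v i = u j" "v j = u i" by (simp_all add: v Transposition.transpose_def)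
  have vo: "v x = u x" if "x \<noteq> i" "x \<noteq> j" for x using that by (simp add: v Transposition.transpose_def)
  show ?thesis unfolding desc_tail_def
  proof (intro CollectI conjI allI impI perm)
    fix p q assume pq: "k + 1 \<le> p \<and> p < q \<and> q \<le> n"
    have pi: "p \<noteq> i" "q \<noteq> i" using pq ij k by auto
    show "u p > u q"
    proof (cases "p = j")
      case True
      then have "q \<noteq> j" using pq by simp
      then have "u q = v q" using vo pi by simp
      also have "\<dots> < v j" using vt[of j q] pq True by simp
      finally show ?thesis using vi uij True by simp
    next
      case pj: False
      show ?thesis
      proof (cases "q = j")
        case False
        then show ?thesis using vo pi pj vt[of p q] pq by simp
      next
        case True
        have "u p = v p" using vo pi pj by simp
        also have "\<dots> > v j" using vt[of p j] pq True by simp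
        finally have upi: "u p > u i" using vi by simp
        show ?thesis
        proof (rule ccontr)
          assume "\<not> u p > u q"
          moreover have "u p \<noteq> u q" using inj pq by (metis less_irrefl injD)
          ultimately have upj: "u p < u j" using True by simp
          have ipj: "i < p" "p < j" using pq ij k True by auto
          have "inv_count n u + card {(i,j),(i,p),(p,j)} \<le> inv_count n v"
            unfolding vdef using ipj upi upj
            by (intro key[OF perm ij(1) ij' ij(4) uij]) auto
          moreover have "card {(i,j),(i,p),(p,j)} = 3" using ipj by auto
          ultimately show False using len by simp
        qed
      qed
    qed
  qed
qed

theorem lemma3p7:
  fixes n k k' :: nat and u w :: "nat \<Rightarrow> nat"
  assumes "k \<in> {1..n-1}" and "w \<in> desc_tail n k"
    and "k' \<in> {1..n-1}" and "k' \<le> k"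
    and "u permutes {1..n}" and "kbruhat_le n k' u w"
  shows "u \<in> desc_tail n k"
  using assms(6) unfolding kbruhat_le_def
proof (induction rule: converse_rtranclp_induct)
  case base
  then show ?case using assms(2) .
next
  case (step y z)
  then show ?case using cover_step[OF assms(4)] by blast
qed

end
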